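(* Let $f:\mathbb{N}\to\mathbb{N}$ satisfy $f(n)/n\to0$, and let $T$ be a locally finite, perfect tree with fixed root $r$. Then the compatibility graph $C_{T,r}$ is $\mathcal{Z}_f^+$-Ramsey: for every finite coloring of the edges of $K_\mathbb{N}$ there is a monochromatic copy of $C_{T,r}$ whose vertex set $V$ does not satisfy $|V\cap\{1,\dots,n\}|/f(n)\to0$.
   Context: $\mathbb{N}=\{1,2,\dots\}$, $K_\mathbb{N}$ the complete graph on $\mathbb{N}$; a copy is a subgraph isomorphic to the given graph, monochromatic if all its edges have the same color. $\mathcal{Z}_f$ is the ideal of sets $A\subseteq\mathbb{N}$ with $|A\cap\{1,\dots,n\}|/f(n)\to0$, and $\mathcal{Z}_f^+$ is its complement in $\mathcal{P}(\mathbb{N})$. For a tree $T$ with root $r$, $v$ is an extension of $u$ if $u$ lies on the unique path from $r$ to $v$; $u,v$ are compatible if one is an extension of the other. $T$ is perfect if every vertex has two extensions that are incompatible with each other. The compatibility graph $C_{T,r}$ has vertex set $V(T)$ and an edge between every pair of distinct compatible vertices. *)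

theory Defs
  imports Complex_Main
begin

definition is_path :: "'a set \<Rightarrow> ('a \<Rightarrow> 'a \<Rightarrow> bool) \<Rightarrow> 'a list \<Rightarrow> bool" where
  "is_path V E p \<longleftrightarrow> p \<noteq> [] \<and> set p \<subseteq> V \<and> distinct p \<and>
     (\<forall>i. Suc i < length p \<longrightarrow> E (p ! i) (p ! Suc i))"

definition is_tree :: "'a set \<Rightarrow> ('a \<Rightarrow> 'a \<Rightarrow> bool) \<Rightarrow> bool" where
  "is_tree V E \<longleftrightarrow> V \<noteq> {} \<and>
     (\<forall>u v. E u v \<longrightarrow> u \<in> V \<and> v \<in> V \<and> u \<noteq> v \<and> E v u) \<and>
     (\<forall>u\<in>V. \<forall>v\<in>V. \<exists>!p. is_path V E p \<and> hd p = u \<and> last p = v)"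

definition locally_finite :: "'a set \<Rightarrow> ('a \<Rightarrow> 'a \<Rightarrow> bool) \<Rightarrow> bool" where
  "locally_finite V E \<longleftrightarrow> (\<forall>v\<in>V. finite {w. E v w})"

definition tree_path :: "'a set \<Rightarrow> ('a \<Rightarrow> 'a \<Rightarrow> bool) \<Rightarrow> 'a \<Rightarrow> 'a \<Rightarrow> 'a list" where
  "tree_path V E u v = (THE p. is_path V E p \<and> hd p = u \<and> last p = v)"

definition extension :: "'a set \<Rightarrow> ('a \<Rightarrow> 'a \<Rightarrow> bool) \<Rightarrow> 'a \<Rightarrow> 'a \<Rightarrow> 'a \<Rightarrow> bool" where
  "extension V E r u v \<longleftrightarrow> u \<in> V \<and> v \<in> V \<and> u \<in> set (tree_path V E r v)"

definition compatible :: "'a set \<Rightarrow> ('a \<Rightarrow> 'a \<Rightarrow> bool) \<Rightarrow> 'a \<Rightarrow> 'a \<Rightarrow> 'a \<Rightarrow> bool" where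
  "compatible V E r u v \<longleftrightarrow> extension V E r u v \<or> extension V E r v u"

definition perfect_tree :: "'a set \<Rightarrow> ('a \<Rightarrow> 'a \<Rightarrow> bool) \<Rightarrow> 'a \<Rightarrow> bool" where
  "perfect_tree V E r \<longleftrightarrow> (\<forall>v\<in>V. \<exists>a b. extension V E r v a \<and> extension V E r v b \<and>
       \<not> compatible V E r a b)"

definition compat_graph_edge :: "'a set \<Rightarrow> ('a \<Rightarrow> 'a \<Rightarrow> bool) \<Rightarrow> 'a \<Rightarrow> 'a \<Rightarrow> 'a \<Rightarrow> bool" where
  "compat_graph_edge V E r u v \<longleftrightarrow> u \<in> V \<and> v \<in> V \<and> u \<noteq> v \<and> compatible V E r u v"

definition Z_ideal :: "(nat \<Rightarrow> nat) \<Rightarrow> nat set set" where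
  "Z_ideal f = {A. (\<lambda>n. real (card (A \<inter> {1..n})) / real (f n)) \<longlonglongrightarrow> 0}"

definition KN_edges :: "nat set set" where
  "KN_edges = {{x, y} | x y. 1 \<le> x \<and> 1 \<le> y \<and> x \<noteq> y}"

end

theory Submission
  imports Defs "HOL-Library.Countable_Set"
begin


definition big :: "nat set \<Rightarrow> bool" where
 "big S \<longleftrightarrow> (\<exists>d>0. \<forall>N. \<exists>n\<ge>N. d * real n \<le> real (card (S \<inter> {1..n})))"

lemma big_mono: assumes "big S" "S \<subseteq> T" shows "big T"
proof -
  obtain d where d: "d > 0" "\<forall>N. \<exists>n\<ge>N. d * real n \<le> real (card (S \<inter> {1..n}))"
    using assms(1) unfolding big_def by blast
  have "card (S \<inter> {1..n}) \<le> card (T \<inter> {1..n})" for n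
    by (rule card_mono) (use assms(2) in auto)
  then show ?thesis unfolding big_def using d
    by (meson of_nat_le_iff order_trans)
qed

lemma not_big_D: assumes "\<not> big S" "d > 0"
  shows "\<exists>N. \<forall>n\<ge>N. real (card (S \<inter> {1..n})) < d * real n"
  using assms unfolding big_def by (meson not_le)

lemma not_big_Un: assumes "\<not> big S" "\<not> big T" shows "\<not> big (S \<union> T)"
proof
  assume "big (S \<union> T)"
  then obtain d where d: "d > 0" "\<forall>N. \<exists>n\<ge>N. d * real n \<le> real (card ((S \<union> T) \<inter> {1..n}))"
    unfolding big_def by blast
  obtain N1 where N1: "\<forall>n\<ge>N1. real (card (S \<inter> {1..n})) < (d/2) * real n"
    using not_big_D[OF assms(1), of "d/2"] d by auto
  obtain N2 where N2: "\<forall>n\<ge>N2. real (card (T \<inter> {1..n})) < (d/2) * real n"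
    using not_big_D[OF assms(2), of "d/2"] d by auto
  obtain n where n: "n \<ge> max N1 N2" "d * real n \<le> real (card ((S \<union> T) \<inter> {1..n}))"
    using d by blast
  have "card ((S \<union> T) \<inter> {1..n}) \<le> card (S \<inter> {1..n}) + card (T \<inter> {1..n})"
    by (metis Int_Un_distrib2 card_Un_le)
  then have "real (card ((S \<union> T) \<inter> {1..n})) \<le> real (card (S \<inter> {1..n})) + real (card (T \<inter> {1..n}))"
    by linarith
  moreover have "real (card (S \<inter> {1..n})) < (d/2) * real n" "real (card (T \<inter> {1..n})) < (d/2) * real n"
    using N1 N2 n(1) by auto
  ultimately show False using n(2) by linarith
qed

lemma big_UNIV: "big UNIV"
  unfolding big_def by (rule exI[of _ 1]) auto

lemma finite_not_big: assumes "finite S" shows "\<not> big S"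
proof
  assume "big S"
  then obtain d where d: "d > 0" "\<forall>N. \<exists>n\<ge>N. d * real n \<le> real (card (S \<inter> {1..n}))"
    unfolding big_def by blast
  define N where "N = nat \<lceil>real (card S) / d\<rceil> + 1"
  obtain n where n: "n \<ge> N" "d * real n \<le> real (card (S \<inter> {1..n}))" using d by blast
  have "card (S \<inter> {1..n}) \<le> card S" by (rule card_mono) (use assms in auto)
  moreover have "real n > real (card S) / d" using n(1) unfolding N_def by linarith
  then have "d * real n > real (card S)" using d(1) by (simp add: field_simps)
  ultimately show False using n(2) by linarith
qed

lemma big_nonempty: "big S \<Longrightarrow> S \<noteq> {}"
  using finite_not_big by fastforce

definition goodfam :: "nat set set \<Rightarrow> bool" where
 "goodfam F \<longleftrightarrow> (\<forall>S\<in>F. \<forall>T\<in>F. S \<inter> T \<in> F) \<and> (\<forall>S\<in>F. big S)"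

lemma exists_maxfam: "\<exists>M. goodfam M \<and> (\<forall>X. goodfam X \<longrightarrow> M \<subseteq> X \<longrightarrow> X = M)"
proof -
  have "\<exists>M\<in>{F. goodfam F}. \<forall>X\<in>{F. goodfam F}. M \<subseteq> X \<longrightarrow> X = M"
  proof (rule subset_Zorn')
    fix C assume C: "subset.chain {F. goodfam F} C"
    then have sub: "C \<subseteq> {F. goodfam F}" and tot: "\<forall>X\<in>C. \<forall>Y\<in>C. X \<subseteq> Y \<or> Y \<subseteq> X"
      by (auto simp: subset_chain_def)
    have "goodfam (\<Union>C)" unfolding goodfam_def
    proof safe
      fix S T F1 F2 assume "S \<in> F1" "F1 \<in> C" "T \<in> F2" "F2 \<in> C"
      then show "S \<inter> T \<in> \<Union>C" using tot sub unfolding goodfam_def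
        by (metis (no_types, lifting) UnionI mem_Collect_eq subset_iff)
    next
      fix S F1 assume "S \<in> F1" "F1 \<in> C"
      then show "big S" using sub unfolding goodfam_def by blast
    qed
    then show "\<Union>C \<in> {F. goodfam F}" by simp
  qed
  then show ?thesis by auto
qed

locale maxfam =
  fixes M assumes good: "goodfam M" and maxi: "\<And>X. goodfam X \<Longrightarrow> M \<subseteq> X \<Longrightarrow> X = M"
begin

lemma Int_in: "S \<in> M \<Longrightarrow> T \<in> M \<Longrightarrow> S \<inter> T \<in> M"
  using good unfolding goodfam_def by blast

lemma big_in: "S \<in> M \<Longrightarrow> big S"
  using good unfolding goodfam_def by blast

lemma extend: assumes "big X" "\<forall>S\<in>M. big (S \<inter> X)" shows "X \<in> M"
proof -
  let ?M' = "M \<union> {X} \<union> (\<lambda>S. S \<inter> X) ` M"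
  have "goodfam ?M'" unfolding goodfam_def
  proof (intro conjI ballI)
    fix S T assume S: "S \<in> ?M'" and T: "T \<in> ?M'"
    have mem: "Z \<in> ?M' \<longleftrightarrow> Z \<in> M \<or> Z = X \<or> (\<exists>S0\<in>M. Z = S0 \<inter> X)" for Z by auto
    have C: "S \<inter> T \<in> M \<or> S \<inter> T = X \<or> (\<exists>S0\<in>M. S \<inter> T = S0 \<inter> X)"
    proof -
      consider "S \<in> M" | "S = X" | S0 where "S0 \<in> M" "S = S0 \<inter> X" using S mem by blast
      then show ?thesis
      proof cases
        case 1
        consider "T \<in> M" | "T = X" | T0 where "T0 \<in> M" "T = T0 \<inter> X" using T mem by blast
        then show ?thesis
        proof cases
          case 1 then show ?thesis using \<open>S \<in> M\<close> Int_in by blast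
        next
          case 2 then show ?thesis using \<open>S \<in> M\<close> by blast
        next
          case 3
          then have "S \<inter> T = (S \<inter> T0) \<inter> X" by blast
          then show ?thesis using 3 \<open>S \<in> M\<close> Int_in by blast
        qed
      next
        case 2
        consider "T \<in> M" | "T = X" | T0 where "T0 \<in> M" "T = T0 \<inter> X" using T mem by blast
        then show ?thesis
        proof cases
          case 1 then show ?thesis using 2 by (metis Int_commute)
        next
          case 2 then show ?thesis using \<open>S = X\<close> by simp
        next
          case 3
          then have "S \<inter> T = T0 \<inter> X" using \<open>S = X\<close> by blast
          then show ?thesis using 3 by blast
        qed
      next
        case 3
        consider "T \<in> M" | "T = X" | T0 where "T0 \<in> M" "T = T0 \<inter> X" using T mem by blast
        then show ?thesis
        proof cases
          case 1
          then have "S \<inter> T = (S0 \<inter> T) \<inter> X" using 3 by blast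
          then show ?thesis using 3 1 Int_in by blast
        next
          case 2
          then have "S \<inter> T = S0 \<inter> X" using 3 by blast
          then show ?thesis using 3 by blast
        next
          case 4: 3
          then have "S \<inter> T = (S0 \<inter> T0) \<inter> X" using 3 by blast
          then show ?thesis using 3 4 Int_in by blast
        qed
      qed
    qed
    show "S \<inter> T \<in> ?M'" using C mem by blast
  next
    fix S assume "S \<in> ?M'" then show "big S" using assms big_in by auto
  qed
  then have "?M' = M" by (rule maxi) auto
  then show ?thesis by auto
qed

lemma dich: "X \<in> M \<or> - X \<in> M"
proof (rule ccontr)
  assume a: "\<not> (X \<in> M \<or> - X \<in> M)"
  have h1: "\<not> big X \<or> (\<exists>S\<in>M. \<not> big (S \<inter> X))" using a extend by blast
  have h2: "\<not> big (-X) \<or> (\<exists>S\<in>M. \<not> big (S \<inter> -X))" using a extend by blast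
  show False
  proof (cases "big X")
    case False
    show False
    proof (cases "big (-X)")
      case False
      then have "\<not> big (X \<union> -X)" using \<open>\<not> big X\<close> not_big_Un by blast
      then show False using big_UNIV by simp
    next
      case True
      then obtain T where T: "T \<in> M" "\<not> big (T \<inter> -X)" using h2 by blast
      have "T \<subseteq> X \<union> (T \<inter> -X)" by auto
      then show False using not_big_Un[OF \<open>\<not> big X\<close> T(2)] big_mono big_in[OF T(1)] by blast
    qed
  next
    case True
    then obtain S where S: "S \<in> M" "\<not> big (S \<inter> X)" using h1 by blast
    show False
    proof (cases "big (-X)")
      case False
      have "S \<subseteq> (S \<inter> X) \<union> -X" by auto
      then show False using not_big_Un[OF S(2) False] big_mono big_in[OF S(1)] by blast
    next
      case True
      then obtain T where T: "T \<in> M" "\<not> big (T \<inter> -X)" using h2 by blast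
      have "S \<inter> T \<subseteq> (S \<inter> X) \<union> (T \<inter> -X)" by auto
      then show False using not_big_Un[OF S(2) T(2)] big_mono big_in[OF Int_in[OF S(1) T(1)]] by blast
    qed
  qed
qed

lemma cofinite_in: assumes "finite (- X)" shows "X \<in> M"
  using dich big_in finite_not_big[OF assms] by blast

lemma union_in:
  assumes "finite J" shows "Y \<in> M \<Longrightarrow> Y \<subseteq> (\<Union>j\<in>J. X j) \<Longrightarrow> \<exists>j\<in>J. X j \<in> M"
  using assms
proof (induction J arbitrary: Y rule: finite_induct)
  case empty
  then show ?case using big_in big_nonempty by auto
next
  case (insert j J)
  show ?case
  proof (cases "X j \<in> M")
    case True then show ?thesis by auto
  next
    case False
    then have "- X j \<in> M" using dich by blast
    then have "Y \<inter> - X j \<in> M" using insert Int_in by blast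
    moreover have "Y \<inter> - X j \<subseteq> (\<Union>j\<in>J. X j)" using insert.prems by auto
    ultimately show ?thesis using insert.IH by auto
  qed
qed

lemma Inter_in: assumes "finite B" shows "R \<in> M \<Longrightarrow> (\<forall>y\<in>B. X y \<in> M) \<Longrightarrow> R \<inter> (\<Inter>y\<in>B. X y) \<in> M"
  using assms
proof (induction B rule: finite_induct)
  case empty then show ?case by simp
next
  case (insert b B)
  then have "R \<inter> (\<Inter>y\<in>B. X y) \<in> M" by auto
  then have "(R \<inter> (\<Inter>y\<in>B. X y)) \<inter> X b \<in> M" using insert Int_in by auto
  then show ?case by (simp add: Int_ac)
qed

end


definition Nb :: "(nat set \<Rightarrow> nat) \<Rightarrow> nat \<Rightarrow> nat \<Rightarrow> nat set" where
  "Nb c i x = {y. 1 \<le> y \<and> y \<noteq> x \<and> c {x, y} = i}"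

context maxfam begin

lemma color_exists: assumes fin: "finite (c ` KN_edges)"
  shows "\<exists>i. {x. 1 \<le> x \<and> Nb c i x \<in> M} \<in> M"
proof -
  have ex: "\<exists>j\<in>c ` KN_edges. Nb c j x \<in> M" if x: "1 \<le> x" for x
  proof (rule union_in[OF fin])
    have "finite (- {y. 1 \<le> y \<and> y \<noteq> x})"
      by (rule finite_subset[of _ "{0, x}"]) auto
    then show "{y. 1 \<le> y \<and> y \<noteq> x} \<in> M" by (rule cofinite_in)
    show "{y. 1 \<le> y \<and> y \<noteq> x} \<subseteq> (\<Union>j\<in>c ` KN_edges. Nb c j x)"
    proof
      fix y assume y: "y \<in> {y. 1 \<le> y \<and> y \<noteq> x}"
      then have "{x, y} \<in> KN_edges" using x unfolding KN_edges_def by auto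
      then show "y \<in> (\<Union>j\<in>c ` KN_edges. Nb c j x)" using y unfolding Nb_def by auto
    qed
  qed
  show ?thesis
  proof -
    have "\<exists>j\<in>c ` KN_edges. {x. 1 \<le> x \<and> Nb c j x \<in> M} \<in> M"
    proof (rule union_in[OF fin])
      have "finite (- {x::nat. 1 \<le> x})"
        by (rule finite_subset[of _ "{0}"]) auto
      then show "{x::nat. 1 \<le> x} \<in> M" by (rule cofinite_in)
      show "{x. 1 \<le> x} \<subseteq> (\<Union>j\<in>c ` KN_edges. {x. 1 \<le> x \<and> Nb c j x \<in> M})"
        using ex by blast
    qed
    then show ?thesis by blast
  qed
qed

end

locale coreL = maxfam M for M +
  fixes c :: "nat set \<Rightarrow> nat" and f :: "nat \<Rightarrow> nat" and i :: nat
  assumes f1: "\<forall>n\<ge>1. f n \<ge> 1" and f0: "(\<lambda>n. real (f n) / real n) \<longlonglongrightarrow> 0"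
    and Ain: "{x. 1 \<le> x \<and> Nb c i x \<in> M} \<in> M"
begin

definition A where "A = {x. 1 \<le> x \<and> Nb c i x \<in> M}"

lemma block_exists: assumes "R \<in> M"
  shows "\<exists>n\<ge>Suc k. f n \<le> card (R \<inter> {1..n}) \<and> k \<le> card (R \<inter> {1..n})"
proof -
  obtain d where d: "d > 0" "\<forall>N. \<exists>n\<ge>N. d * real n \<le> real (card (R \<inter> {1..n}))"
    using big_in[OF assms] unfolding big_def by blast
  have "\<forall>\<^sub>F n in sequentially. real (f n) / real n < d/2"
    using order_tendstoD(2)[OF f0, of "d/2"] d(1) by simp
  then obtain N0 where N0: "\<forall>n\<ge>N0. real (f n) / real n < d/2"
    unfolding eventually_sequentially by blast
  define N where "N = max (Suc k) (max N0 (nat \<lceil>2 * real k / d\<rceil>))"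
  obtain n where n: "n \<ge> N" "d * real n \<le> real (card (R \<inter> {1..n}))" using d by blast
  have n1: "n \<ge> Suc k" "n \<ge> N0" "real n \<ge> 2 * real k / d" using n(1) unfolding N_def by linarith+
  then have "real (f n) / real n < d/2" using N0 by blast
  then have "real (f n) < d/2 * real n" using n1(1) by (simp add: divide_less_eq)
  moreover have "real k \<le> d/2 * real n" using n1(3) d(1) by (simp add: field_simps)
  moreover have "d/2 * real n \<le> d * real n" using d(1) by simp
  ultimately have "f n \<le> card (R \<inter> {1..n})" "k \<le> card (R \<inter> {1..n})" using n(2) by linarith+
  then show ?thesis using n1(1) by blast
qed

definition pick :: "nat set \<Rightarrow> nat" where "pick R = (SOME x. x \<in> R)"
definition bn :: "nat \<Rightarrow> nat set \<Rightarrow> nat" where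
  "bn k R = (SOME n. n \<ge> Suc k \<and> f n \<le> card (R \<inter> {1..n}) \<and> k \<le> card (R \<inter> {1..n}))"
definition blk :: "nat \<Rightarrow> nat set \<Rightarrow> nat set" where "blk k R = R \<inter> {1..bn k R}"
definition nxt :: "nat \<Rightarrow> nat set \<Rightarrow> nat set" where
  "nxt k R = (R \<inter> Nb c i (pick R)) \<inter> (\<Inter>y\<in>blk k (R \<inter> Nb c i (pick R)). Nb c i y)"

lemma Nb_in: "x \<in> A \<Longrightarrow> Nb c i x \<in> M" unfolding A_def by auto

lemma step:
  assumes "R \<in> M" "R \<subseteq> A"
  shows "pick R \<in> R" "nxt k R \<in> M" "nxt k R \<subseteq> A"
    "nxt k R \<subseteq> R \<inter> Nb c i (pick R) \<inter> (\<Inter>y\<in>blk k (R \<inter> Nb c i (pick R)). Nb c i y)"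
    "blk k (R \<inter> Nb c i (pick R)) \<subseteq> R \<inter> Nb c i (pick R)"
    "bn k (R \<inter> Nb c i (pick R)) \<ge> Suc k"
    "f (bn k (R \<inter> Nb c i (pick R))) \<le> card (blk k (R \<inter> Nb c i (pick R)))"
    "k \<le> card (blk k (R \<inter> Nb c i (pick R)))"
proof -
  show p: "pick R \<in> R" unfolding pick_def using big_nonempty[OF big_in[OF assms(1)]] by (simp add: some_in_eq)
  let ?R' = "R \<inter> Nb c i (pick R)"
  have R': "?R' \<in> M" using Int_in[OF assms(1) Nb_in] p assms(2) by blast
  have bnp: "bn k ?R' \<ge> Suc k \<and> f (bn k ?R') \<le> card (?R' \<inter> {1..bn k ?R'}) \<and> k \<le> card (?R' \<inter> {1..bn k ?R'})"
    unfolding bn_def by (rule someI_ex, rule block_exists[OF R'])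
  then show "bn k ?R' \<ge> Suc k" "f (bn k ?R') \<le> card (blk k ?R')" "k \<le> card (blk k ?R')"
    unfolding blk_def by auto
  show bs: "blk k ?R' \<subseteq> ?R'" unfolding blk_def by auto
  have "?R' \<inter> (\<Inter>y\<in>blk k ?R'. Nb c i y) \<in> M"
    by (rule Inter_in) (use R' bs assms(2) Nb_in in \<open>auto simp: blk_def\<close>)
  then show "nxt k R \<in> M" unfolding nxt_def .
  show "nxt k R \<subseteq> A" "nxt k R \<subseteq> ?R' \<inter> (\<Inter>y\<in>blk k ?R'. Nb c i y)"
    using assms(2) unfolding nxt_def by auto
qed

definition Rs :: "nat \<Rightarrow> nat set" where "Rs = rec_nat A (\<lambda>k R. nxt k R)"
definition a :: "nat \<Rightarrow> nat" where "a k = pick (Rs k)"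
definition B :: "nat \<Rightarrow> nat set" where "B k = blk k (Rs k \<inter> Nb c i (a k))"

lemma Rs_0: "Rs 0 = A" and Rs_Suc: "Rs (Suc k) = nxt k (Rs k)"
  unfolding Rs_def by auto

lemma Rs_good: "Rs k \<in> M \<and> Rs k \<subseteq> A"
proof (induction k)
  case 0 then show ?case using Ain by (simp add: Rs_0 A_def)
next
  case (Suc k) then show ?case using step(2,3) by (simp add: Rs_Suc)
qed

lemma st: "a k \<in> Rs k" "Rs (Suc k) \<subseteq> Rs k \<inter> Nb c i (a k) \<inter> (\<Inter>y\<in>B k. Nb c i y)"
  "B k \<subseteq> Rs k \<inter> Nb c i (a k)" "bn k (Rs k \<inter> Nb c i (a k)) \<ge> Suc k"
  "f (bn k (Rs k \<inter> Nb c i (a k))) \<le> card (B k)" "k \<le> card (B k)"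
  using step(1)[of "Rs k", OF Rs_good[of k, THEN conjunct1] Rs_good[of k, THEN conjunct2]]
    step(2-8)[of "Rs k" k, OF Rs_good[of k, THEN conjunct1] Rs_good[of k, THEN conjunct2]]
  unfolding a_def B_def Rs_Suc by auto

lemma Rs_anti: "k \<le> l \<Longrightarrow> Rs l \<subseteq> Rs k"
proof (induction l rule: dec_induct)
  case base then show ?case by simp
next
  case (step l) then show ?case using st(2)[of l] by auto
qed

lemma a_in: "a k \<in> Rs k" by (rule st(1))

lemma Nb_D: "y \<in> Nb c i x \<Longrightarrow> 1 \<le> y \<and> y \<noteq> x \<and> c {x, y} = i" unfolding Nb_def by auto

lemma a_later: assumes "k < l" shows "a l \<in> Nb c i (a k)"
proof -
  have "a l \<in> Rs (Suc k)" using a_in Rs_anti[of "Suc k" l] assms by auto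
  then show ?thesis using st(2)[of k] by auto
qed

lemma B_a: assumes "x \<in> B l" shows "x \<in> Nb c i (a k) \<or> a k \<in> Nb c i x"
proof (cases "k \<le> l")
  case True
  have xl: "x \<in> Rs l \<inter> Nb c i (a l)" using st(3)[of l] assms by auto
  show ?thesis
  proof (cases "k = l")
    case True then show ?thesis using xl by auto
  next
    case False
    then have "x \<in> Rs (Suc k)" using xl Rs_anti[of "Suc k" l] \<open>k \<le> l\<close> by auto
    then show ?thesis using st(2)[of k] by auto
  qed
next
  case False
  then have "a k \<in> Rs (Suc l)" using a_in Rs_anti[of "Suc l" k] by auto
  then show ?thesis using st(2)[of l] assms by auto
qed

lemma A_pos: "x \<in> A \<Longrightarrow> 1 \<le> x" unfolding A_def by auto

lemma result:
  "inj a \<and> range a \<subseteq> {1..} \<and> (\<Union>k. B k) \<subseteq> {1..} \<and> infinite (\<Union>k. B k) \<and> range a \<inter> (\<Union>k. B k) = {} \<and>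
   (\<forall>k l. k \<noteq> l \<longrightarrow> c {a k, a l} = i) \<and> (\<forall>k. \<forall>x\<in>(\<Union>k. B k). c {a k, x} = i) \<and> (\<Union>k. B k) \<notin> Z_ideal f"
proof (intro conjI)
  have aa: "a k \<noteq> a l \<and> c {a k, a l} = i" if "k \<noteq> l" for k l
  proof (cases "k < l")
    case True then show ?thesis using a_later[OF True] Nb_D by metis
  next
    case False
    then have "l < k" using that by simp
    then show ?thesis using a_later[of l k] Nb_D by (metis insert_commute)
  qed
  then show "inj a" unfolding inj_def by blast
  show "\<forall>k l. k \<noteq> l \<longrightarrow> c {a k, a l} = i" using aa by blast
  have aA: "a k \<in> A" for k using a_in Rs_good by blast
  then show "range a \<subseteq> {1..}" using A_pos by auto
  have BA: "B k \<subseteq> A" for k using st(3)[of k] Rs_good by auto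
  then show "(\<Union>k. B k) \<subseteq> {1..}" using A_pos by blast
  have Bc: "a k \<noteq> x \<and> c {a k, x} = i" if "x \<in> B l" for k l x
    using B_a[OF that, of k] Nb_D by (metis insert_commute)
  then show "range a \<inter> (\<Union>k. B k) = {}" by blast
  show "\<forall>k. \<forall>x\<in>(\<Union>k. B k). c {a k, x} = i" using Bc by blast
  have finB: "finite (B k)" for k unfolding B_def blk_def by auto
  have cardB: "k \<le> card (B k)" for k using st(6)[of k] .
  show "infinite (\<Union>k. B k)"
  proof
    assume fin: "finite (\<Union>k. B k)"
    have "card (B (Suc (card (\<Union>k. B k)))) \<le> card (\<Union>k. B k)"
      by (rule card_mono[OF fin]) auto
    then show False using cardB[of "Suc (card (\<Union>k. B k))"] by simp
  qed
  show "(\<Union>k. B k) \<notin> Z_ideal f"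
  proof
    let ?U = "\<Union>k. B k"
    assume "?U \<in> Z_ideal f"
    then have lim: "(\<lambda>n. real (card (?U \<inter> {1..n})) / real (f n)) \<longlonglongrightarrow> 0" unfolding Z_ideal_def by simp
    have "\<forall>\<^sub>F n in sequentially. real (card (?U \<inter> {1..n})) / real (f n) < 1"
      using order_tendstoD(2)[OF lim, of 1] by simp
    then obtain N where N: "\<forall>n\<ge>N. real (card (?U \<inter> {1..n})) / real (f n) < 1"
      unfolding eventually_sequentially by blast
    define n where "n = bn N (Rs N \<inter> Nb c i (a N))"
    have n1: "n \<ge> Suc N" using st(4)[of N] by (simp add: n_def)
    have fn: "f n \<ge> 1" using f1 n1 by simp
    have "B N \<subseteq> ?U \<inter> {1..n}" unfolding B_def blk_def n_def by auto
    then have "card (B N) \<le> card (?U \<inter> {1..n})" by (intro card_mono) auto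
    moreover have "f n \<le> card (B N)" using st(5)[of N] by (simp add: n_def)
    ultimately have "real (f n) \<le> real (card (?U \<inter> {1..n}))" by linarith
    then have "real (card (?U \<inter> {1..n})) / real (f n) \<ge> 1" using fn by simp
    moreover have "n \<ge> N" using n1 by simp
    ultimately show False using N by fastforce
  qed
qed

end

lemma core:
  fixes c :: "nat set \<Rightarrow> nat" and f :: "nat \<Rightarrow> nat"
  assumes fin: "finite (c ` KN_edges)" and f1: "\<forall>n\<ge>1. f n \<ge> 1" and f0: "(\<lambda>n. real (f n) / real n) \<longlonglongrightarrow> 0"
  shows "\<exists>i (a::nat\<Rightarrow>nat) B. inj a \<and> range a \<subseteq> {1..} \<and> B \<subseteq> {1..} \<and> infinite B \<and> range a \<inter> B = {} \<and>
   (\<forall>k l. k \<noteq> l \<longrightarrow> c {a k, a l} = i) \<and> (\<forall>k. \<forall>x\<in>B. c {a k, x} = i) \<and> B \<notin> Z_ideal f"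
proof -
  obtain M where M: "goodfam M" "\<forall>X. goodfam X \<longrightarrow> M \<subseteq> X \<longrightarrow> X = M" using exists_maxfam by blast
  interpret maxfam M using M by unfold_locales auto
  obtain i where i: "{x. 1 \<le> x \<and> Nb c i x \<in> M} \<in> M" using color_exists[OF fin] by blast
  interpret coreL M c f i using f1 f0 i by unfold_locales auto
  show ?thesis by (intro exI) (rule result)
qed



lemma take_path:
  assumes p: "is_path V E p" and j: "0 < j" "j \<le> length p"
  shows "is_path V E (take j p) \<and> hd (take j p) = hd p \<and> last (take j p) = p ! (j - 1)"
proof -
  have ne: "p \<noteq> []" using p unfolding is_path_def by auto
  have t: "take j p \<noteq> []" using ne j by simp
  have "is_path V E (take j p)" unfolding is_path_def
  proof (intro conjI allI impI)
    show "take j p \<noteq> []" by (rule t)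
    show "set (take j p) \<subseteq> V" using p unfolding is_path_def by (meson order_trans set_take_subset)
    show "distinct (take j p)" using p unfolding is_path_def by simp
    fix i assume "Suc i < length (take j p)"
    then show "E (take j p ! i) (take j p ! Suc i)" using p unfolding is_path_def by simp
  qed
  moreover have "hd (take j p) = hd p" using j ne by (cases p; cases j) auto
  moreover have "last (take j p) = p ! (j - 1)" using t j by (simp add: last_conv_nth)
  ultimately show ?thesis by blast
qed

locale treeL =
  fixes V :: "'a set" and E and r
  assumes tree: "is_tree V E" and rV: "r \<in> V"
begin

abbreviation "tp v \<equiv> tree_path V E r v"

lemma tp: assumes "v \<in> V" shows "is_path V E (tp v) \<and> hd (tp v) = r \<and> last (tp v) = v"
proof -
  have "\<exists>!p. is_path V E p \<and> hd p = r \<and> last p = v" using tree rV assms unfolding is_tree_def by blast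
  then show ?thesis unfolding tree_path_def by (rule theI')
qed

lemma tp_unique: assumes "is_path V E p" "hd p = r" "last p = v" shows "tp v = p"
proof -
  have "v \<in> V" using assms unfolding is_path_def by (metis last_in_set subsetD)
  then have "\<exists>!p. is_path V E p \<and> hd p = r \<and> last p = v" using tree rV unfolding is_tree_def by blast
  then show ?thesis unfolding tree_path_def using assms by (intro the1_equality) auto
qed

lemma tp_ne: "v \<in> V \<Longrightarrow> tp v \<noteq> []" using tp unfolding is_path_def by blast

lemma tp_take: assumes "v \<in> V" "j < length (tp v)" shows "tp (tp v ! j) = take (Suc j) (tp v)"
  using take_path[of V E "tp v" "Suc j"] tp[OF assms(1)] assms(2) by (intro tp_unique) auto

lemma tp_set: "v \<in> V \<Longrightarrow> set (tp v) \<subseteq> V" using tp unfolding is_path_def by blast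

lemma ext_refl: "v \<in> V \<Longrightarrow> extension V E r v v"
  unfolding extension_def using tp tp_ne by (metis last_in_set)

lemma ext_V: "extension V E r u v \<Longrightarrow> u \<in> V \<and> v \<in> V" unfolding extension_def by blast

lemma ext_trans: assumes "extension V E r u v" "extension V E r v w" shows "extension V E r u w"
proof -
  have V: "u \<in> V" "v \<in> V" "w \<in> V" using assms ext_V by auto
  obtain j where j: "j < length (tp w)" "tp w ! j = v" using assms(2) unfolding extension_def by (meson in_set_conv_nth)
  have "tp v = take (Suc j) (tp w)" using tp_take[OF V(3) j(1)] j(2) by simp
  then have "set (tp v) \<subseteq> set (tp w)" by (metis set_take_subset)
  then show ?thesis using assms V unfolding extension_def by blast
qed

lemma ext_chain: assumes "extension V E r a w" "extension V E r b w" shows "compatible V E r a b"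
proof -
  have V: "a \<in> V" "b \<in> V" "w \<in> V" using assms ext_V by auto
  obtain i where i: "i < length (tp w)" "tp w ! i = a" using assms(1) unfolding extension_def by (meson in_set_conv_nth)
  obtain j where j: "j < length (tp w)" "tp w ! j = b" using assms(2) unfolding extension_def by (meson in_set_conv_nth)
  show ?thesis
  proof (cases "i \<le> j")
    case True
    have "tp b = take (Suc j) (tp w)" using tp_take[OF V(3) j(1)] j(2) by simp
    moreover have "a \<in> set (take (Suc j) (tp w))"
    proof -
      have l: "i < length (take (Suc j) (tp w))" using True i(1) by simp
      have "take (Suc j) (tp w) ! i = a" using True i(2) by simp
      then show ?thesis using nth_mem[OF l] by simp
    qed
    ultimately show ?thesis using V unfolding compatible_def extension_def by auto
  next
    case False
    have "tp a = take (Suc i) (tp w)" using tp_take[OF V(3) i(1)] i(2) by simp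
    moreover have "b \<in> set (take (Suc i) (tp w))"
    proof -
      have l: "j < length (take (Suc i) (tp w))" using False j(1) by simp
      have "take (Suc i) (tp w) ! j = b" using False j(2) by simp
      then show ?thesis using nth_mem[OF l] by simp
    qed
    ultimately show ?thesis using V unfolding compatible_def extension_def by auto
  qed
qed

lemma compat_sym: "compatible V E r a b \<Longrightarrow> compatible V E r b a" unfolding compatible_def by blast

lemma ncompat_ext: assumes "\<not> compatible V E r a b" "extension V E r b b'" shows "\<not> compatible V E r a b'"
proof
  assume "compatible V E r a b'"
  then consider "extension V E r a b'" | "extension V E r b' a" unfolding compatible_def by blast
  then show False
  proof cases
    case 1 then show False using ext_chain[OF 1 assms(2)] assms(1) by blast
  next
    case 2 then show False using ext_trans[OF assms(2) 2] assms(1) unfolding compatible_def by blast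
  qed
qed

lemma compat_refl: "v \<in> V \<Longrightarrow> compatible V E r v v" unfolding compatible_def using ext_refl by blast

definition Dn :: "nat \<Rightarrow> 'a set" where
  "Dn n = {v. \<exists>p. is_path V E p \<and> hd p = r \<and> last p = v \<and> length p \<le> Suc n}"

lemma Dn_V: "Dn n \<subseteq> V" unfolding Dn_def is_path_def by (auto intro: last_in_set)

lemma Dn_finite: assumes lf: "locally_finite V E" shows "finite (Dn n)"
proof (induction n)
  case 0
  have "Dn 0 \<subseteq> {r}" unfolding Dn_def is_path_def
  proof clarify
    fix p assume "p \<noteq> []" "length p \<le> Suc 0"
    then obtain x where "p = [x]" by (cases p) auto
    then show "last p = hd p" by simp
  qed
  then show ?case by (rule finite_subset) simp
next
  case (Suc n)
  have "Dn (Suc n) \<subseteq> Dn n \<union> (\<Union>u\<in>Dn n. {w. E u w})"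
  proof
    fix v assume "v \<in> Dn (Suc n)"
    then obtain p where p: "is_path V E p" "hd p = r" "last p = v" "length p \<le> Suc (Suc n)" unfolding Dn_def by blast
    show "v \<in> Dn n \<union> (\<Union>u\<in>Dn n. {w. E u w})"
    proof (cases "length p \<le> Suc n")
      case True then show ?thesis using p unfolding Dn_def by blast
    next
      case False
      then have l: "length p = Suc (Suc n)" using p(4) by simp
      have tk: "is_path V E (take (Suc n) p) \<and> hd (take (Suc n) p) = hd p \<and> last (take (Suc n) p) = p ! n"
        using take_path[OF p(1), of "Suc n"] l by simp
      then have "p ! n \<in> Dn n" unfolding Dn_def using p(2) l by (intro CollectI exI[of _ "take (Suc n) p"]) simp
      moreover have "E (p ! n) (p ! Suc n)" using p(1) l unfolding is_path_def by simp
      moreover have "p ! Suc n = v" using p(3) l by (metis last_conv_nth list.size(3) nat.distinct(1) diff_Suc_1)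
      ultimately show ?thesis by blast
    qed
  qed
  moreover have "finite (\<Union>u\<in>Dn n. {w. E u w})"
  proof (rule finite_UN_I[OF Suc.IH])
    fix u assume "u \<in> Dn n"
    then have "u \<in> V" using Dn_V by blast
    then show "finite {w. E u w}" using lf unfolding locally_finite_def by blast
  qed
  ultimately show ?case using finite_subset finite_UnI[OF Suc.IH] by blast
qed

lemma V_countable: assumes "locally_finite V E" shows "countable V"
proof -
  have "V \<subseteq> (\<Union>n. Dn n)"
  proof
    fix v assume "v \<in> V"
    then have "v \<in> Dn (length (tp v))" using tp unfolding Dn_def by fastforce
    then show "v \<in> (\<Union>n. Dn n)" by blast
  qed
  moreover have "countable (\<Union>n. Dn n)" using Dn_finite[OF assms] by (simp add: countable_finite)
  ultimately show ?thesis by (rule countable_subset)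
qed

lemma antichain: assumes perf: "perfect_tree V E r"
  shows "\<exists>Q. Q \<subseteq> V \<and> infinite Q \<and> (\<forall>u\<in>Q. \<forall>v\<in>Q. u \<noteq> v \<longrightarrow> \<not> compatible V E r u v)"
proof -
  define PQ where "PQ v = (SOME xy. extension V E r v (fst xy) \<and> extension V E r v (snd xy) \<and> \<not> compatible V E r (fst xy) (snd xy))" for v
  have PQ: "extension V E r v (fst (PQ v)) \<and> extension V E r v (snd (PQ v)) \<and> \<not> compatible V E r (fst (PQ v)) (snd (PQ v))"
    if "v \<in> V" for v
  proof -
    have "\<exists>x y. extension V E r v x \<and> extension V E r v y \<and> \<not> compatible V E r x y"
      using perf that unfolding perfect_tree_def by (rule bspec)
    then obtain x y where "extension V E r v x" "extension V E r v y" "\<not> compatible V E r x y"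
      by blast
    then have "(\<lambda>xy. extension V E r v (fst xy) \<and> extension V E r v (snd xy) \<and> \<not> compatible V E r (fst xy) (snd xy)) (x, y)"
      unfolding fst_conv snd_conv by (intro conjI)
    then show ?thesis unfolding PQ_def by (rule someI)
  qed
  define vs where "vs = rec_nat r (\<lambda>_ v. snd (PQ v))"
  have vs0: "vs 0 = r" and vsS: "vs (Suc k) = snd (PQ (vs k))" for k unfolding vs_def by auto
  have vsV: "vs k \<in> V" for k
  proof (induction k)
    case 0 then show ?case using rV by (simp add: vs0)
  next
    case (Suc k)
    then have "extension V E r (vs k) (snd (PQ (vs k)))" using PQ by blast
    then show ?case using ext_V by (simp add: vsS)
  qed
  have vsext: "extension V E r (vs k) (vs l)" if "k \<le> l" for k l
    using that
  proof (induction l rule: dec_induct)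
    case base then show ?case using ext_refl vsV by blast
  next
    case (step l) then show ?case using ext_trans PQ[OF vsV[of l]] by (auto simp: vsS)
  qed
  define q where "q k = fst (PQ (vs k))" for k
  have nc: "\<not> compatible V E r (q k) (q l)" if "k < l" for k l
  proof -
    have "extension V E r (vs (Suc k)) (q l)"
      using ext_trans[OF vsext[of "Suc k" l]] PQ[OF vsV[of l]] that unfolding q_def by auto
    then show ?thesis using ncompat_ext PQ[OF vsV[of k]] unfolding q_def vsS by blast
  qed
  have qV: "q k \<in> V" for k using PQ[OF vsV[of k]] ext_V unfolding q_def by blast
  have nc2: "\<not> compatible V E r (q k) (q l)" if "k \<noteq> l" for k l
    using nc compat_sym that by (metis nat_neq_iff)
  have "inj q" unfolding inj_def
  proof (intro allI impI)
    fix k l assume e: "q k = q l"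
    show "k = l"
    proof (rule ccontr)
      assume "k \<noteq> l"
      then have "\<not> compatible V E r (q k) (q l)" by (rule nc2)
      then show False using e compat_refl[OF qV[of k]] by simp
    qed
  qed
  then have "infinite (range q)" by (simp add: range_inj_infinite)
  moreover have "range q \<subseteq> V" using qV by auto
  moreover have "\<forall>u\<in>range q. \<forall>v\<in>range q. u \<noteq> v \<longrightarrow> \<not> compatible V E r u v" using nc2 by (metis rangeE)
  ultimately show ?thesis by blast
qed

end


lemma Z_sub: assumes "S \<subseteq> T" "T \<in> Z_ideal f" shows "S \<in> Z_ideal f"
proof -
  have lim: "(\<lambda>n. real (card (T \<inter> {1..n})) / real (f n)) \<longlonglongrightarrow> 0" using assms(2) unfolding Z_ideal_def by simp
  have le: "real (card (S \<inter> {1..n})) / real (f n) \<le> real (card (T \<inter> {1..n})) / real (f n)" for n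
  proof -
    have "card (S \<inter> {1..n}) \<le> card (T \<inter> {1..n})" by (rule card_mono) (use assms(1) in auto)
    then show ?thesis by (intro divide_right_mono) auto
  qed
  have "(\<lambda>n. real (card (S \<inter> {1..n})) / real (f n)) \<longlonglongrightarrow> 0"
    by (rule real_tendsto_sandwich[OF _ _ tendsto_const lim]) (use le in auto)
  then show ?thesis unfolding Z_ideal_def by simp
qed

theorem mainTheorem17:
  fixes f :: "nat \<Rightarrow> nat" and V :: "'a set" and E :: "'a \<Rightarrow> 'a \<Rightarrow> bool" and r :: 'a
  assumes "\<forall>n\<ge>1. f n \<ge> 1"
    and "(\<lambda>n. real (f n) / real n) \<longlonglongrightarrow> 0"
    and "is_tree V E" and "locally_finite V E" and "r \<in> V" and "perfect_tree V E r"
  shows "\<forall>c :: nat set \<Rightarrow> nat. finite (c ` KN_edges) \<longrightarrow>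
           (\<exists>g col. inj_on g V \<and> g ` V \<subseteq> {1..} \<and>
              (\<forall>u v. compat_graph_edge V E r u v \<longrightarrow> c {g u, g v} = col) \<and>
              g ` V \<notin> Z_ideal f)"
proof (intro allI impI)
  fix c :: "nat set \<Rightarrow> nat" assume fin: "finite (c ` KN_edges)"
  interpret treeL V E r using assms(3,5) by unfold_locales
  from core[OF fin assms(1,2)] obtain i and a :: "nat \<Rightarrow> nat" and B where cc: "inj a \<and> range a \<subseteq> {1..} \<and> B \<subseteq> {1..} \<and> infinite B \<and> range a \<inter> B = {} \<and>
    (\<forall>k l. k \<noteq> l \<longrightarrow> c {a k, a l} = i) \<and> (\<forall>k. \<forall>x\<in>B. c {a k, x} = i) \<and> B \<notin> Z_ideal f"
    by blast
  note core = cc[THEN conjunct1] cc[THEN conjunct2, THEN conjunct1] cc[THEN conjunct2, THEN conjunct2, THEN conjunct1]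
    cc[THEN conjunct2, THEN conjunct2, THEN conjunct2, THEN conjunct1]
    cc[THEN conjunct2, THEN conjunct2, THEN conjunct2, THEN conjunct2, THEN conjunct1]
    cc[THEN conjunct2, THEN conjunct2, THEN conjunct2, THEN conjunct2, THEN conjunct2, THEN conjunct1]
    cc[THEN conjunct2, THEN conjunct2, THEN conjunct2, THEN conjunct2, THEN conjunct2, THEN conjunct2, THEN conjunct1]
    cc[THEN conjunct2, THEN conjunct2, THEN conjunct2, THEN conjunct2, THEN conjunct2, THEN conjunct2, THEN conjunct2]
  from antichain[OF assms(6)] obtain Q where Qc: "Q \<subseteq> V \<and> infinite Q \<and> (\<forall>u\<in>Q. \<forall>v\<in>Q. u \<noteq> v \<longrightarrow> \<not> compatible V E r u v)"
    by blast
  note Q = Qc[THEN conjunct1] Qc[THEN conjunct2, THEN conjunct1] Qc[THEN conjunct2, THEN conjunct2]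
  have cV: "countable V" using V_countable[OF assms(4)] .
  obtain idx :: "'a \<Rightarrow> nat" where idx: "inj_on idx (V - Q)"
    using countable_subset[OF _ cV, of "V - Q"] unfolding countable_def by blast
  obtain eQ :: "'a \<Rightarrow> nat" where eQ: "bij_betw eQ Q UNIV"
    using countableE_infinite[OF countable_subset[OF Q(1) cV] Q(2)] by blast
  obtain eB :: "nat \<Rightarrow> nat" where eB: "bij_betw eB B UNIV"
    using countableE_infinite[OF countableI_type core(4)] by blast
  define h where "h = inv_into B eB"
  have hb: "bij_betw h UNIV B" unfolding h_def by (rule bij_betw_inv_into[OF eB])
  have gQb: "bij_betw (h \<circ> eQ) Q B" by (rule bij_betw_trans[OF eQ hb])
  define g where "g v = (if v \<in> Q then h (eQ v) else a (idx v))" for v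
  have gQ: "v \<in> Q \<Longrightarrow> g v = (h \<circ> eQ) v" for v unfolding g_def by simp
  have gP: "v \<notin> Q \<Longrightarrow> g v = a (idx v)" for v unfolding g_def by simp
  have gQB: "v \<in> Q \<Longrightarrow> g v \<in> B" for v using gQ gQb bij_betw_apply by fastforce
  have imgQ: "g ` Q = B"
  proof -
    have "g ` Q = (h \<circ> eQ) ` Q" using gQ by (rule image_cong[OF refl])
    then show ?thesis using gQb bij_betw_imp_surj_on by metis
  qed
  have injQ: "inj_on (h \<circ> eQ) Q" using gQb bij_betw_imp_inj_on by blast
  show "\<exists>g col. inj_on g V \<and> g ` V \<subseteq> {1..} \<and>
              (\<forall>u v. compat_graph_edge V E r u v \<longrightarrow> c {g u, g v} = col) \<and>
              g ` V \<notin> Z_ideal f"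
  proof (intro exI conjI)
    show "inj_on g V"
    proof (rule inj_onI)
      fix u v assume uv: "u \<in> V" "v \<in> V" "g u = g v"
      show "u = v"
      proof (cases "u \<in> Q")
        case True
        show ?thesis
        proof (cases "v \<in> Q")
          case True
          then show ?thesis using \<open>u \<in> Q\<close> uv(3) gQ injQ by (metis inj_onD)
        next
          case False
          then have "g v \<in> range a" using gP by simp
          moreover have "g u \<in> B" using gQB True by simp
          ultimately show ?thesis using uv(3) core(5) by auto
        qed
      next
        case False
        show ?thesis
        proof (cases "v \<in> Q")
          case True
          then have "g u \<in> range a" using gP False by simp
          moreover have "g v \<in> B" using gQB True by simp
          ultimately show ?thesis using uv(3) core(5) by auto
        next
          case vQ: False
          then have "a (idx u) = a (idx v)" using uv(3) gP False by simp
          then have "idx u = idx v" using core(1) by (simp add: inj_eq)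
          then show ?thesis using idx uv(1,2) False vQ by (meson DiffI inj_onD)
        qed
      qed
    qed
    show "g ` V \<subseteq> {1..}"
    proof
      fix x assume "x \<in> g ` V"
      then obtain v where v: "v \<in> V" "x = g v" by blast
      show "x \<in> {1..}"
      proof (cases "v \<in> Q")
        case True then show ?thesis using gQB core(3) v by auto
      next
        case False then show ?thesis using gP core(2) v by auto
      qed
    qed
    show "\<forall>u v. compat_graph_edge V E r u v \<longrightarrow> c {g u, g v} = i"
    proof (intro allI impI)
      fix u v assume e: "compat_graph_edge V E r u v"
      then have uv: "u \<in> V" "v \<in> V" "u \<noteq> v" "compatible V E r u v" unfolding compat_graph_edge_def by auto
      show "c {g u, g v} = i"
      proof (cases "u \<in> Q")
        case True
        show ?thesis
        proof (cases "v \<in> Q")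
          case True
          then show ?thesis using \<open>u \<in> Q\<close> uv Q(3) by blast
        next
          case False
          have "c {a (idx v), g u} = i" using core(7) gQB[OF \<open>u \<in> Q\<close>] by blast
          then show ?thesis using gP[OF False] by (simp add: insert_commute)
        qed
      next
        case False
        show ?thesis
        proof (cases "v \<in> Q")
          case True
          have "c {a (idx u), g v} = i" using core(7) gQB[OF True] by blast
          then show ?thesis using gP[OF False] by simp
        next
          case vQ: False
          have "idx u \<noteq> idx v" using idx uv False vQ by (meson DiffI inj_onD)
          then show ?thesis using core(6) gP False vQ by simp
        qed
      qed
    qed
    show "g ` V \<notin> Z_ideal f"
    proof
      assume "g ` V \<in> Z_ideal f"
      moreover have "B \<subseteq> g ` V" using imgQ Q(1) by blast
      ultimately have "B \<in> Z_ideal f" using Z_sub by blast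
      then show False using core(8) by simp
    qed
  qed
qed


end
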